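(* Let $0<b<c$, $a>0$, and let $(x_1,y_1),\ldots,(x_T,y_T)\in\mathbb{R}^d\times\{-1,+1\}$ be an arbitrary sequence of examples. Run the LASEC-SS algorithm (described in the context) with parameters $a,b,c$ on this sequence. Then for every sequence $u_1,\ldots,u_T\in\mathbb{R}^d$ and every $\gamma>0$, $$\mathbb{E}\Big[\sum_{t=1}^TM_t\Big]\le\frac{1}{\gamma}\bar L_{\gamma,T}(\{u_t\})+\frac{a}{2\gamma^2}\Big(b\|u_1\|^2+cV_m+\mathbb{E}\Big[\sum_{t=1}^TM_tZ_t(u_t^\top x_t)^2\Big]\Big)+\frac{1}{2a}\mathbb{E}\Big[\sum_{t=1}^TM_tZ_tx_t^\top D_t^{-1}x_t\Big].$$ Moreover, the expected number of labels queried equals $\sum_{t=1}^T\mathbb{E}\big[\frac{a}{a+|\hat p_t|}\big]$.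
   Context: LASEC-SS algorithm with parameters $0<b<c$, $a>0$. Initialize $D_0=\frac{bc}{c-b}I\in\mathbb{R}^{d\times d}$, $e_0=0\in\mathbb{R}^d$, $k=1$. For $t=1,\ldots,T$: receive $x_t$; set $S_t=(D_{k-1}^{-1}+c^{-1}I)^{-1}+x_tx_t^\top$ and $\hat p_t=x_t^\top S_t^{-1}(I+c^{-1}D_{k-1})^{-1}e_{k-1}$; predict $\hat y_t=\mathrm{sign}(\hat p_t)$; draw a Bernoulli random variable $Z_t\in\{0,1\}$ with parameter $a/(a+|\hat p_t|)$; if $Z_t=1$, query the label $y_t$ and, if $\hat y_t\ne y_t$, set $e_k=(I+c^{-1}D_{k-1})^{-1}e_{k-1}+y_tx_t$, $D_k=S_t$, $k\leftarrow k+1$. Let $M_t$ be the indicator of $\hat y_t\ne y_t$ (mistakes count on all rounds, queried or not). In the last term, $D_t$ denotes the matrix $S_t$ computed at round $t$ (on rounds with $M_tZ_t=1$ this is the matrix stored by the update). Let $t_1<\cdots<t_m$ be the rounds with $M_tZ_t=1$ (update rounds) and $V_m=\sum_{k=2}^m\|u_{t_k}-u_{t_{k-1}}\|^2$. Hinge loss $\ell_{\gamma,t}(u)=\max\{0,\gamma-y_tu^\top x_t\}$ and $\bar L_{\gamma,T}(\{u_t\})=\mathbb{E}\big[\sum_{t=1}^TM_tZ_t\ell_{\gamma,t}(u_t)\big]$. *)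

theory Defs
  imports "HOL-Analysis.Analysis"
begin

text \<open>Rounds are numbered 1..T.
  The random coins are encoded by z :: nat \<Rightarrow> bool (z t = True iff Z_t = 1).\<close>

definition outer :: "real^'d \<Rightarrow> real^'d^'d" where
  "outer v = (\<chi> i j. v$i * v$j)"

definition lasec_S :: "real \<Rightarrow> real^'d^'d \<Rightarrow> real^'d \<Rightarrow> real^'d^'d" where
  "lasec_S c D v = matrix_inv (matrix_inv D + (1/c) *\<^sub>R mat 1) + outer v"

definition lasec_p :: "real \<Rightarrow> real^'d^'d \<Rightarrow> real^'d \<Rightarrow> real^'d \<Rightarrow> real" where
  "lasec_p c D e v = v \<bullet> (matrix_inv (lasec_S c D v) *v (matrix_inv (mat 1 + (1/c) *\<^sub>R D) *v e))"

text \<open>State (D_{k-1}, e_{k-1}) after rounds 1..t.\<close>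
fun lasec_state :: "real \<Rightarrow> real \<Rightarrow> (nat \<Rightarrow> real^'d) \<Rightarrow> (nat \<Rightarrow> real) \<Rightarrow> (nat \<Rightarrow> bool)
    \<Rightarrow> nat \<Rightarrow> (real^'d^'d) \<times> (real^'d)" where
  "lasec_state b c x y z 0 = ((b * c / (c - b)) *\<^sub>R mat 1, 0)"
| "lasec_state b c x y z (Suc t) =
     (let (D, e) = lasec_state b c x y z t;
          p = lasec_p c D e (x (Suc t))
      in if z (Suc t) \<and> sgn p \<noteq> y (Suc t)
         then (lasec_S c D (x (Suc t)),
               matrix_inv (mat 1 + (1/c) *\<^sub>R D) *v e + y (Suc t) *\<^sub>R x (Suc t))
         else (D, e))"

text \<open>Matrix S_t (= D_t in the bound) and margin \<hat>p_t computed at round t (t \<ge> 1).\<close>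
definition lasec_Smat :: "real \<Rightarrow> real \<Rightarrow> (nat \<Rightarrow> real^'d) \<Rightarrow> (nat \<Rightarrow> real) \<Rightarrow> (nat \<Rightarrow> bool)
    \<Rightarrow> nat \<Rightarrow> real^'d^'d" where
  "lasec_Smat b c x y z t = lasec_S c (fst (lasec_state b c x y z (t - 1))) (x t)"

definition lasec_phat :: "real \<Rightarrow> real \<Rightarrow> (nat \<Rightarrow> real^'d) \<Rightarrow> (nat \<Rightarrow> real) \<Rightarrow> (nat \<Rightarrow> bool)
    \<Rightarrow> nat \<Rightarrow> real" where
  "lasec_phat b c x y z t =
     (case lasec_state b c x y z (t - 1) of (D, e) \<Rightarrow> lasec_p c D e (x t))"

definition lasec_M :: "real \<Rightarrow> real \<Rightarrow> (nat \<Rightarrow> real^'d) \<Rightarrow> (nat \<Rightarrow> real) \<Rightarrow> (nat \<Rightarrow> bool)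
    \<Rightarrow> nat \<Rightarrow> bool" where
  "lasec_M b c x y z t = (sgn (lasec_phat b c x y z t) \<noteq> y t)"

text \<open>Law of (Z_1,...,Z_T): product of the conditional Bernoulli probabilities
  P(Z_t = 1 | Z_1..Z_{t-1}) = a/(a+|\<hat>p_t|).\<close>
definition lasec_prob :: "real \<Rightarrow> real \<Rightarrow> real \<Rightarrow> (nat \<Rightarrow> real^'d) \<Rightarrow> (nat \<Rightarrow> real) \<Rightarrow> nat
    \<Rightarrow> (nat \<Rightarrow> bool) \<Rightarrow> real" where
  "lasec_prob a b c x y T z =
     (\<Prod>t\<in>{1..T}. (let q = a / (a + \<bar>lasec_phat b c x y z t\<bar>) in if z t then q else 1 - q))"

definition lasec_E :: "real \<Rightarrow> real \<Rightarrow> real \<Rightarrow> (nat \<Rightarrow> real^'d) \<Rightarrow> (nat \<Rightarrow> real) \<Rightarrow> nat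
    \<Rightarrow> ((nat \<Rightarrow> bool) \<Rightarrow> real) \<Rightarrow> real" where
  "lasec_E a b c x y T F =
     (\<Sum>z\<in>PiE {1..T} (\<lambda>_. UNIV). lasec_prob a b c x y T z * F z)"

definition hinge :: "real \<Rightarrow> real \<Rightarrow> real^'d \<Rightarrow> real^'d \<Rightarrow> real" where
  "hinge \<gamma> yt w xt = max 0 (\<gamma> - yt * (w \<bullet> xt))"

definition lasec_upd :: "real \<Rightarrow> real \<Rightarrow> (nat \<Rightarrow> real^'d) \<Rightarrow> (nat \<Rightarrow> real) \<Rightarrow> nat
    \<Rightarrow> (nat \<Rightarrow> bool) \<Rightarrow> nat set" where
  "lasec_upd b c x y T z = {t \<in> {1..T}. lasec_M b c x y z t \<and> z t}"

definition lasec_V :: "real \<Rightarrow> real \<Rightarrow> (nat \<Rightarrow> real^'d) \<Rightarrow> (nat \<Rightarrow> real) \<Rightarrow> nat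
    \<Rightarrow> (nat \<Rightarrow> real^'d) \<Rightarrow> (nat \<Rightarrow> bool) \<Rightarrow> real" where
  "lasec_V b c x y T u z =
     (let U = lasec_upd b c x y T z in
      \<Sum>t\<in>U. if {s \<in> U. s < t} = {} then 0
             else (norm (u t - u (Max {s \<in> U. s < t})))\<^sup>2)"

end

theory Submission
  imports Defs
begin


definition pdm :: "real^'n^'n \<Rightarrow> bool" where
  "pdm A \<longleftrightarrow> transpose A = A \<and> (\<forall>v. v \<noteq> 0 \<longrightarrow> 0 < v \<bullet> (A *v v))"

definition psdm :: "real^'n^'n \<Rightarrow> bool" where
  "psdm A \<longleftrightarrow> transpose A = A \<and> (\<forall>v. 0 \<le> v \<bullet> (A *v v))"

lemma pdm_psdm: "pdm A \<Longrightarrow> psdm A"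
  unfolding pdm_def psdm_def by (metis inner_zero_left matrix_vector_mult_0_right order_less_imp_le order_refl)

lemma sym_inner: "transpose A = A \<Longrightarrow> x \<bullet> (A *v y) = (A *v x) \<bullet> (y::real^'n)"
  by (metis dot_lmul_matrix transpose_matrix_vector)

lemma sym_inner': "transpose A = A \<Longrightarrow> x \<bullet> (A *v y) = y \<bullet> (A *v (x::real^'n))"
  by (metis sym_inner inner_commute)

lemma pdm_inv_ok:
  assumes "pdm A"
  shows "A ** matrix_inv A = mat 1 \<and> matrix_inv A ** A = mat 1"
proof -
  have "\<forall>x. A *v x = 0 \<longrightarrow> x = 0"
    using assms unfolding pdm_def by (metis inner_zero_right less_irrefl)
  then have "invertible A"
    using invertible_left_inverse matrix_left_invertible_ker by blast
  then show ?thesis unfolding invertible_def matrix_inv_def by (rule someI_ex)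
qed

lemma pdm_inv_v1: "pdm A \<Longrightarrow> A *v (matrix_inv A *v w) = w"
  by (simp add: matrix_vector_mul_assoc pdm_inv_ok)
lemma pdm_inv_v2: "pdm A \<Longrightarrow> matrix_inv A *v (A *v w) = w"
  by (simp add: matrix_vector_mul_assoc pdm_inv_ok)

lemma pdm_inv:
  assumes "pdm A" shows "pdm (matrix_inv A)"
proof -
  have ok: "A ** matrix_inv A = mat 1" "matrix_inv A ** A = mat 1" using pdm_inv_ok[OF assms] by auto
  have tA: "transpose A = A" using assms pdm_def by blast
  have "transpose (matrix_inv A) ** A = mat 1"
    using arg_cong[OF ok(1), of transpose] by (simp add: matrix_transpose_mul tA)
  then have "transpose (matrix_inv A) = matrix_inv A"
    by (metis matrix_mul_assoc matrix_mul_lid matrix_mul_rid ok(1))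
  moreover have "0 < v \<bullet> (matrix_inv A *v v)" if "v \<noteq> 0" for v
  proof -
    define w where "w = matrix_inv A *v v"
    have "v = A *v w" using pdm_inv_v1[OF assms] w_def by simp
    then have "w \<noteq> 0" using that by auto
    then have "0 < w \<bullet> (A *v w)" using assms pdm_def by blast
    moreover have "matrix_inv A *v (A *v w) = w" using pdm_inv_v2[OF assms] .
    ultimately show ?thesis using \<open>v = A *v w\<close> by (simp add: inner_commute)
  qed
  ultimately show ?thesis unfolding pdm_def by blast
qed

lemma pdm_add_psdm: "pdm A \<Longrightarrow> psdm B \<Longrightarrow> pdm (A + B)"
  unfolding pdm_def psdm_def
  by (auto simp: matrix_vector_mult_add_rdistrib inner_add_right transpose_def vec_eq_iff add_pos_nonneg)

lemma psdm_scaled_id: "0 \<le> k \<Longrightarrow> psdm (k *\<^sub>R mat 1 :: real^'n^'n)"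
  unfolding psdm_def
  by (auto simp: scaleR_matrix_vector_assoc[symmetric] transpose_def vec_eq_iff mat_def[symmetric]) (simp add: mat_def)

lemma pdm_scaled_id: "0 < k \<Longrightarrow> pdm (k *\<^sub>R mat 1 :: real^'n^'n)"
  unfolding pdm_def
  by (auto simp: scaleR_matrix_vector_assoc[symmetric] transpose_def vec_eq_iff mat_def[symmetric]) (simp add: mat_def)

lemma pdm_scale: "0 < k \<Longrightarrow> pdm A \<Longrightarrow> pdm (k *\<^sub>R A)"
  unfolding pdm_def
  by (auto simp: scaleR_matrix_vector_assoc[symmetric] transpose_def vec_eq_iff)

lemma add_id_pdm: "pdm A \<Longrightarrow> 0 < k \<Longrightarrow> pdm (mat 1 + k *\<^sub>R A)"
  by (metis add.commute pdm_add_psdm pdm_scale psdm_scaled_id scaleR_one zero_le_one)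

lemma outer_mult: "outer x *v v = (x \<bullet> v) *\<^sub>R x"
  by (simp add: outer_def matrix_vector_mult_def vec_eq_iff inner_vec_def sum_distrib_left mult_ac)

lemma outer_quad: "v \<bullet> (outer x *v v) = (x \<bullet> v)^2"
  by (simp add: outer_mult power2_eq_square inner_commute)

lemma psdm_outer: "psdm (outer x)"
  unfolding psdm_def by (auto simp: outer_quad) (auto simp: outer_def transpose_def vec_eq_iff mult.commute)

lemma pdm_S: "pdm D \<Longrightarrow> 0 < c \<Longrightarrow> pdm (lasec_S c D x)"
  unfolding lasec_S_def
  by (metis add.commute pdm_add_psdm pdm_inv psdm_outer psdm_scaled_id less_imp_le zero_less_divide_1_iff pdm_scaled_id)



definition Phi :: "real^'n^'n \<Rightarrow> real^'n \<Rightarrow> real^'n \<Rightarrow> real" where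
  "Phi A e v = (1/2) * ((v - matrix_inv A *v e) \<bullet> (A *v (v - matrix_inv A *v e)))"

lemma Phi_nonneg: "pdm A \<Longrightarrow> 0 \<le> Phi A e v"
  using pdm_psdm unfolding Phi_def psdm_def by auto

lemma scaleR_mv: "(k *\<^sub>R A) *v w = k *\<^sub>R (A *v (w::real^'n))"
  by (simp add: scaleR_matrix_vector_assoc)

lemma step_core:
  fixes D :: "real^'n^'n" and e x v v' :: "real^'n"
  assumes D: "pdm D" and c: "0 < c" and y: "y = -1 \<or> y = 1"
  defines "M \<equiv> matrix_inv D + (1/c) *\<^sub>R mat 1"
  defines "Dt \<equiv> matrix_inv M"
  defines "N \<equiv> mat 1 + (1/c) *\<^sub>R D"
  defines "f \<equiv> matrix_inv N *v e"
  defines "\<theta> \<equiv> matrix_inv D *v e"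
  shows "Phi (lasec_S c D x) (f + y *\<^sub>R x) v \<le>
           (1/2) * ((v - \<theta>) \<bullet> (Dt *v (v - \<theta>))) + (1/2) * (v \<bullet> x)^2 - y * (v \<bullet> x)
           + y * lasec_p c D e x + (1/2) * (x \<bullet> (matrix_inv (lasec_S c D x) *v x))"
    and "Dt *v \<theta> = f"
proof -
  have pM: "pdm M" unfolding M_def
    by (metis D c pdm_add_psdm pdm_inv psdm_scaled_id less_imp_le zero_less_divide_1_iff)
  have pDt: "pdm Dt" unfolding Dt_def using pM pdm_inv by blast
  have pN: "pdm N" unfolding N_def using D c by (intro add_id_pdm) simp_all
  define S where "S = lasec_S c D x"
  have pS: "pdm S" unfolding S_def using D c pdm_S by blast
  have Sdef: "S = Dt + outer x" unfolding S_def lasec_S_def Dt_def M_def ..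
  define Si where "Si = matrix_inv S"
  have pSi: "pdm Si" unfolding Si_def using pS pdm_inv by blast
  have sS: "transpose S = S" and sSi: "transpose Si = Si" and sDt: "transpose Dt = Dt"
    using pS pSi pDt unfolding pdm_def by auto
  have p_eq: "lasec_p c D e x = x \<bullet> (Si *v f)"
    unfolding lasec_p_def Si_def S_def f_def N_def ..
  have Nf: "N *v f = e" unfolding f_def using pdm_inv_v1[OF pN] .
  have Mf: "M *v f = \<theta>"
  proof -
    have "e = f + (1/c) *\<^sub>R (D *v f)" using Nf unfolding N_def
      by (simp add: matrix_vector_mult_add_rdistrib scaleR_mv)
    then have "\<theta> = matrix_inv D *v f + (1/c) *\<^sub>R f"
      unfolding \<theta>_def by (simp add: matrix_vector_right_distrib matrix_vector_mult_scaleR pdm_inv_v2[OF D])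
    then show ?thesis unfolding M_def by (simp add: matrix_vector_mult_add_rdistrib scaleR_mv)
  qed
  show Dth: "Dt *v \<theta> = f" unfolding Dt_def using pdm_inv_v2[OF pM] Mf by metis
  define z where "z = Si *v f"
  have Sz: "S *v z = f" unfolding z_def Si_def using pdm_inv_v1[OF pS] .
  have zSz: "z \<bullet> f = z \<bullet> (Dt *v z) + (x \<bullet> z)^2"
    using Sz[symmetric] unfolding Sdef
    by (simp add: matrix_vector_mult_add_rdistrib inner_add_right outer_quad)
  have "0 \<le> (z - \<theta>) \<bullet> (Dt *v (z - \<theta>))" using pDt pdm_psdm psdm_def by blast
  also have "\<dots> = z \<bullet> (Dt *v z) - 2 * (z \<bullet> f) + \<theta> \<bullet> (Dt *v \<theta>)"
    using sym_inner'[OF sDt, of \<theta> z] Dth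
    by (simp add: matrix_vector_mult_diff_distrib inner_diff_left inner_diff_right)
  finally have key: "f \<bullet> (Si *v f) \<le> \<theta> \<bullet> (Dt *v \<theta>)"
    using zSz unfolding z_def[symmetric] by (simp add: inner_commute) (smt (verit) zero_le_power2)
  define e' where "e' = f + y *\<^sub>R x"
  have Phi_eq: "Phi S e' v = (1/2) * (v \<bullet> (S *v v) - 2 * (v \<bullet> e') + e' \<bullet> (Si *v e'))"
  proof -
    have "S *v (Si *v e') = e'" unfolding Si_def using pdm_inv_v1[OF pS] .
    moreover have "(Si *v e') \<bullet> (S *v v) = e' \<bullet> v"
      using sym_inner[OF sS, of "Si *v e'" v] \<open>S *v (Si *v e') = e'\<close> by simp
    ultimately show ?thesis unfolding Phi_def Si_def[symmetric]
      by (simp add: matrix_vector_mult_diff_distrib inner_diff_left inner_diff_right inner_commute)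
  qed
  have y2: "y * y = 1" using y by auto
  have e'Se': "e' \<bullet> (Si *v e') = f \<bullet> (Si *v f) + 2 * (y * (x \<bullet> (Si *v f))) + x \<bullet> (Si *v x)"
    unfolding e'_def using sym_inner'[OF sSi, of f x] y2
    by (simp add: matrix_vector_right_distrib matrix_vector_mult_scaleR inner_add_left inner_add_right algebra_simps)
  have vSv: "v \<bullet> (S *v v) = v \<bullet> (Dt *v v) + (v \<bullet> x)^2"
    unfolding Sdef by (simp add: matrix_vector_mult_add_rdistrib inner_add_right outer_quad inner_commute)
  have ve': "v \<bullet> e' = v \<bullet> f + y * (v \<bullet> x)" unfolding e'_def by (simp add: inner_add_right)
  have vth: "(v - \<theta>) \<bullet> (Dt *v (v - \<theta>)) = v \<bullet> (Dt *v v) - 2 * (v \<bullet> f) + \<theta> \<bullet> (Dt *v \<theta>)"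
    using sym_inner'[OF sDt, of \<theta> v] Dth
    by (simp add: matrix_vector_mult_diff_distrib inner_diff_left inner_diff_right)
  show "Phi (lasec_S c D x) (f + y *\<^sub>R x) v \<le>
           (1/2) * ((v - \<theta>) \<bullet> (Dt *v (v - \<theta>))) + (1/2) * (v \<bullet> x)^2 - y * (v \<bullet> x)
           + y * lasec_p c D e x + (1/2) * (x \<bullet> (matrix_inv (lasec_S c D x) *v x))"
    unfolding S_def[symmetric] e'_def[symmetric] Si_def[symmetric] Phi_eq p_eq
    using key e'Se' vSv ve' vth by (simp add: right_diff_distrib distrib_left)
qed

lemma step_infconv:
  fixes D :: "real^'n^'n" and e x v v' :: "real^'n"
  assumes D: "pdm D" and c: "0 < c"
  defines "M \<equiv> matrix_inv D + (1/c) *\<^sub>R mat 1"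
  defines "Dt \<equiv> matrix_inv M"
  defines "\<theta> \<equiv> matrix_inv D *v e"
  shows "(v - \<theta>) \<bullet> (Dt *v (v - \<theta>)) \<le> 2 * Phi D e v' + c * (norm (v - v'))^2"
proof -
  have pM: "pdm M" unfolding M_def
    by (metis D c pdm_add_psdm pdm_inv psdm_scaled_id less_imp_le zero_less_divide_1_iff)
  have pDi: "pdm (matrix_inv D)" using D pdm_inv by blast
  have sD: "transpose D = D" and sDi: "transpose (matrix_inv D) = matrix_inv D"
    using D pDi unfolding pdm_def by auto
  define \<alpha> where "\<alpha> = v - \<theta>"
  define \<beta> where "\<beta> = v' - \<theta>"
  define g where "g = Dt *v \<alpha>"
  have \<alpha>g: "\<alpha> = matrix_inv D *v g + (1/c) *\<^sub>R g"
    using pdm_inv_v1[OF pM, of \<alpha>] unfolding g_def Dt_def M_def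
    by (simp add: matrix_vector_mult_add_rdistrib scaleR_mv)
  define \<delta> where "\<delta> = \<beta> - matrix_inv D *v g"
  have \<beta>d: "\<beta> = matrix_inv D *v g + \<delta>" unfolding \<delta>_def by simp
  have Phi_eq: "2 * Phi D e v' = \<beta> \<bullet> (D *v \<beta>)" unfolding Phi_def \<beta>_def \<theta>_def by simp
  have DDi: "D *v (matrix_inv D *v g) = g" using pdm_inv_v1[OF D] .
  have A1: "\<alpha> \<bullet> (Dt *v \<alpha>) = g \<bullet> (matrix_inv D *v g) + (1/c) * (g \<bullet> g)"
    unfolding g_def[symmetric] by (subst \<alpha>g) (simp add: inner_add_left inner_add_right inner_commute)
  have A2: "\<beta> \<bullet> (D *v \<beta>) = g \<bullet> (matrix_inv D *v g) + 2 * (g \<bullet> \<delta>) + \<delta> \<bullet> (D *v \<delta>)"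
    using sym_inner[OF sD, of "matrix_inv D *v g" \<delta>] DDi
    by (simp add: \<beta>d matrix_vector_right_distrib inner_add_left inner_add_right inner_commute)
  have "v - v' = \<alpha> - \<beta>" unfolding \<alpha>_def \<beta>_def by simp
  also have "\<dots> = (1/c) *\<^sub>R g - \<delta>" using \<alpha>g \<beta>d by simp
  finally have "c * (norm (v - v'))^2 = c * (((1/c) *\<^sub>R g - \<delta>) \<bullet> ((1/c) *\<^sub>R g - \<delta>))"
    by (simp add: power2_norm_eq_inner)
  also have "\<dots> = (1/c) * (g \<bullet> g) - 2 * (g \<bullet> \<delta>) + c * (\<delta> \<bullet> \<delta>)"
    using c by (simp add: inner_diff_left inner_diff_right inner_commute field_simps power2_eq_square)
  finally have A3: "c * (norm (v - v'))^2 = (1/c) * (g \<bullet> g) - 2 * (g \<bullet> \<delta>) + c * (\<delta> \<bullet> \<delta>)" .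
  have "0 \<le> \<delta> \<bullet> (D *v \<delta>)" using D pdm_psdm psdm_def by blast
  moreover have "0 \<le> \<delta> \<bullet> \<delta>" by simp
  ultimately show ?thesis
    unfolding \<alpha>_def[symmetric] Phi_eq using A1 A2 A3 c
    by (smt (verit) mult_nonneg_nonneg)
qed



lemma state_Suc:
  "lasec_state b c x y z (Suc t) =
     (if z (Suc t) \<and> lasec_M b c x y z (Suc t)
      then (lasec_Smat b c x y z (Suc t),
            matrix_inv (mat 1 + (1/c) *\<^sub>R fst (lasec_state b c x y z t)) *v snd (lasec_state b c x y z t)
              + y (Suc t) *\<^sub>R x (Suc t))
      else lasec_state b c x y z t)"
  by (cases "lasec_state b c x y z t")
     (simp add: lasec_M_def lasec_phat_def lasec_Smat_def Let_def)

lemma state_pdm: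
  assumes "0 < b" "b < c"
  shows "pdm (fst (lasec_state b c x y z t))"
proof (induction t)
  case 0
  have "0 < b * c / (c - b)" using assms by simp
  then show ?case by (simp add: pdm_scaled_id)
next
  case (Suc t)
  then show ?case using assms
    by (subst state_Suc) (auto simp: lasec_Smat_def intro: pdm_S)
qed

lemma phat_1: "lasec_phat b c x y z 1 = 0"
  by (simp add: lasec_phat_def lasec_p_def)

lemma M_1: "y 1 = -1 \<or> y 1 = 1 \<Longrightarrow> lasec_M b c x y z 1"
  unfolding lasec_M_def phat_1 by auto

lemma upd_Suc:
  "lasec_upd b c x y (Suc t) z =
    lasec_upd b c x y t z \<union> (if lasec_M b c x y z (Suc t) \<and> z (Suc t) then {Suc t} else {})"
  by (auto simp: lasec_upd_def le_Suc_eq)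

lemma upd_sub: "lasec_upd b c x y t z \<subseteq> {1..t}"
  by (auto simp: lasec_upd_def)

lemma V_Suc_no:
  assumes "\<not> (lasec_M b c x y z (Suc t) \<and> z (Suc t))"
  shows "lasec_V b c x y (Suc t) v z = lasec_V b c x y t v z"
proof -
  have eqU: "lasec_upd b c x y (Suc t) z = lasec_upd b c x y t z" unfolding upd_Suc using assms by auto
  show ?thesis unfolding lasec_V_def Let_def eqU ..
qed

lemma V_Suc_yes:
  assumes "lasec_M b c x y z (Suc t) \<and> z (Suc t)" and ne: "lasec_upd b c x y t z \<noteq> {}"
  shows "lasec_V b c x y (Suc t) v z = lasec_V b c x y t v z
           + (norm (v (Suc t) - v (Max (lasec_upd b c x y t z))))\<^sup>2"
proof -
  define U where "U = lasec_upd b c x y t z"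
  have U': "lasec_upd b c x y (Suc t) z = insert (Suc t) U"
    unfolding U_def upd_Suc using assms by auto
  have fin: "finite U" using upd_sub[of b c x y t z] U_def finite_subset by blast
  have nin: "Suc t \<notin> U" using upd_sub[of b c x y t z] U_def by auto
  have lt: "{s \<in> insert (Suc t) U. s < Suc t} = U"
    using upd_sub[of b c x y t z] U_def by auto
  have eqs: "{s \<in> insert (Suc t) U. s < r} = {s \<in> U. s < r}" if "r \<in> U" for r
    using that upd_sub[of b c x y t z] U_def by auto
  define h where "h = (\<lambda>W r. if {s \<in> W. s < r} = {} then 0
             else (norm (v r - v (Max {s \<in> W. s < (r::nat)})))\<^sup>2)"
  have "(\<Sum>r\<in>insert (Suc t) U. h (insert (Suc t) U) r) = h (insert (Suc t) U) (Suc t) + (\<Sum>r\<in>U. h (insert (Suc t) U) r)"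
    using fin nin by simp
  also have "(\<Sum>r\<in>U. h (insert (Suc t) U) r) = (\<Sum>r\<in>U. h U r)"
  proof (rule sum.cong)
    fix r assume "r \<in> U"
    show "h (insert (Suc t) U) r = h U r" unfolding h_def eqs[OF \<open>r \<in> U\<close>] ..
  qed simp
  also have "h (insert (Suc t) U) (Suc t) = (norm (v (Suc t) - v (Max U)))\<^sup>2"
    unfolding h_def lt using ne U_def by simp
  finally show ?thesis
    unfolding lasec_V_def Let_def U' U_def[symmetric] h_def by simp
qed

lemma invariant:
  fixes x v :: "nat \<Rightarrow> real^'d"
  assumes b: "0 < b" and bc: "b < c"
    and y: "\<forall>t\<in>{1..T}. y t = -1 \<or> y t = 1" and z1: "z 1"
  defines "g \<equiv> \<lambda>r. (1/2) * (v r \<bullet> x r)^2 - y r * (v r \<bullet> x r) + y r * lasec_phat b c x y z r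
                 + (1/2) * (x r \<bullet> (matrix_inv (lasec_Smat b c x y z r) *v x r))"
  shows "1 \<le> t \<Longrightarrow> t \<le> T \<Longrightarrow> 1 \<in> lasec_upd b c x y t z \<and>
     Phi (fst (lasec_state b c x y z t)) (snd (lasec_state b c x y z t)) (v (Max (lasec_upd b c x y t z)))
       \<le> (1/2) * b * (norm (v 1))^2 + (\<Sum>r\<in>lasec_upd b c x y t z. g r) + (c/2) * lasec_V b c x y t v z"
proof (induction t rule: nat_induct_at_least)
  case base
  have c: "0 < c" using b bc by simp
  have y1: "y 1 = -1 \<or> y 1 = 1" using y base by auto
  have M1: "lasec_M b c x y z 1" using M_1[of y, OF y1] .
  have U1: "lasec_upd b c x y 1 z = {1}" using M1 z1 by (auto simp: lasec_upd_def)
  define k where "k = b * c / (c - b)"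
  have k: "0 < k" unfolding k_def using b bc by simp
  define D0 :: "real^'d^'d" where "D0 = k *\<^sub>R mat 1"
  have pD0: "pdm D0" unfolding D0_def using k pdm_scaled_id by blast
  have st0: "lasec_state b c x y z 0 = (D0, 0)" by (simp add: D0_def k_def)
  have st1: "lasec_state b c x y z 1 = (lasec_S c D0 (x 1),
        matrix_inv (mat 1 + (1/c) *\<^sub>R D0) *v 0 + y 1 *\<^sub>R x 1)"
    using state_Suc[of b c x y z 0] M1 z1 st0 by (simp del: lasec_state.simps add: lasec_Smat_def)
  have core: "Phi (lasec_S c D0 (x 1)) (matrix_inv (mat 1 + (1/c) *\<^sub>R D0) *v 0 + y 1 *\<^sub>R x 1) (v 1)
     \<le> (1/2) * ((v 1 - matrix_inv D0 *v 0) \<bullet> (matrix_inv (matrix_inv D0 + (1/c) *\<^sub>R mat 1) *v (v 1 - matrix_inv D0 *v 0)))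
       + (1/2) * (v 1 \<bullet> x 1)^2 - y 1 * (v 1 \<bullet> x 1) + y 1 * lasec_p c D0 0 (x 1)
       + (1/2) * (x 1 \<bullet> (matrix_inv (lasec_S c D0 (x 1)) *v x 1))"
    by (rule step_core(1)[OF pD0 c y1])
  define v' where "v' = (c / (k + c)) *\<^sub>R v 1"
  have inf: "(v 1 - matrix_inv D0 *v 0) \<bullet> (matrix_inv (matrix_inv D0 + (1/c) *\<^sub>R mat 1) *v (v 1 - matrix_inv D0 *v 0))
      \<le> 2 * Phi D0 0 v' + c * (norm (v 1 - v'))^2"
    by (rule step_infconv[OF pD0 c])
  have "2 * Phi D0 0 v' = k * (norm v')^2"
    unfolding Phi_def D0_def by (simp add: scaleR_mv power2_norm_eq_inner)
  also have "\<dots> = k * (c / (k + c))^2 * (norm (v 1))^2"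
    unfolding v'_def using k c by (simp add: power_mult_distrib power_divide)
  finally have "2 * Phi D0 0 v' + c * (norm (v 1 - v'))^2
      = (k * (c / (k + c))^2 + c * (k / (k + c))^2) * (norm (v 1))^2"
  proof -
    assume h: "2 * Phi D0 0 v' = k * (c / (k + c))^2 * (norm (v 1))^2"
    have "v 1 - v' = (k / (k + c)) *\<^sub>R v 1"
      proof -
      have "v 1 - v' = (1 - c / (k + c)) *\<^sub>R v 1" unfolding v'_def by (simp add: scaleR_diff_left)
      moreover have "1 - c / (k + c) = k / (k + c)" using k c by (simp add: field_simps)
      ultimately show ?thesis by simp
    qed
    then have "(norm (v 1 - v'))^2 = (k / (k + c))^2 * (norm (v 1))^2"
      using k c by (simp add: power_mult_distrib power_divide)
    then show ?thesis using h by (simp add: algebra_simps)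
  qed
  also have "k * (c / (k + c))^2 + c * (k / (k + c))^2 = b"
  proof -
    have "k * (c / (k + c))^2 + c * (k / (k + c))^2 = (k * c^2 + c * k^2) / (k + c)^2"
      by (simp add: power_divide add_divide_distrib)
    also have "\<dots> = (k * c) * (k + c) / ((k + c) * (k + c))"
      by (simp add: power2_eq_square algebra_simps)
    also have "\<dots> = k * c / (k + c)" using k c by simp
    finally have "k * (c / (k + c))^2 + c * (k / (k + c))^2 = k * c / (k + c)" .
    moreover have "k * (c - b) = b * c" unfolding k_def using bc by simp
    then have "k * c = b * (k + c)" by (simp add: algebra_simps)
    then have "k * c / (k + c) = b" using k c by (simp add: field_simps)
    ultimately show ?thesis by simp
  qed
  finally have infb: "2 * Phi D0 0 v' + c * (norm (v 1 - v'))^2 = b * (norm (v 1))^2" .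
  have p0: "lasec_p c D0 0 (x 1) = 0" by (simp add: lasec_p_def)
  have g1: "g 1 = (1/2) * (v 1 \<bullet> x 1)^2 - y 1 * (v 1 \<bullet> x 1)
       + (1/2) * (x 1 \<bullet> (matrix_inv (lasec_S c D0 (x 1)) *v x 1))"
    unfolding g_def phat_1 lasec_Smat_def by (simp del: lasec_state.simps add: st0)
  have V1: "lasec_V b c x y 1 v z = 0" unfolding lasec_V_def U1 by simp
  show ?case unfolding U1 st1 using core inf infb p0 g1 V1 by simp
next
  case (Suc t)
  have c: "0 < c" using b bc by simp
  have IH: "1 \<in> lasec_upd b c x y t z \<and>
     Phi (fst (lasec_state b c x y z t)) (snd (lasec_state b c x y z t)) (v (Max (lasec_upd b c x y t z)))
       \<le> (1/2) * b * (norm (v 1))^2 + (\<Sum>r\<in>lasec_upd b c x y t z. g r) + (c/2) * lasec_V b c x y t v z"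
    using Suc by simp
  define U where "U = lasec_upd b c x y t z"
  have fin: "finite U" using upd_sub[of b c x y t z] U_def finite_subset by blast
  have nin: "Suc t \<notin> U" using upd_sub[of b c x y t z] U_def by auto
  show ?case
  proof (cases "lasec_M b c x y z (Suc t) \<and> z (Suc t)")
    case False
    then show ?thesis using IH V_Suc_no[OF False] state_Suc[of b c x y z t] upd_Suc[of b c x y t z]
      by auto
  next
    case True
    define D where "D = fst (lasec_state b c x y z t)"
    define e where "e = snd (lasec_state b c x y z t)"
    have pD: "pdm D" unfolding D_def using state_pdm[OF b bc] .
    have ys: "y (Suc t) = -1 \<or> y (Suc t) = 1" using y Suc by auto
    have U': "lasec_upd b c x y (Suc t) z = insert (Suc t) U" unfolding U_def upd_Suc using True by auto
    have ne: "U \<noteq> {}" using IH U_def by auto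
    have MaxU': "Max (insert (Suc t) U) = Suc t"
      using fin upd_sub[of b c x y t z] U_def by (auto intro!: Max_eqI)
    have st': "lasec_state b c x y z (Suc t) = (lasec_S c D (x (Suc t)),
        matrix_inv (mat 1 + (1/c) *\<^sub>R D) *v e + y (Suc t) *\<^sub>R x (Suc t))"
      using state_Suc[of b c x y z t] True unfolding D_def e_def by (simp add: lasec_Smat_def)
    note core = step_core(1)[OF pD c ys, where e=e and x="x (Suc t)" and v="v (Suc t)"]
    note inf = step_infconv[OF pD c, of "v (Suc t)" e "v (Max U)"]
    have gS: "g (Suc t) = (1/2) * (v (Suc t) \<bullet> x (Suc t))^2 - y (Suc t) * (v (Suc t) \<bullet> x (Suc t))
       + y (Suc t) * lasec_p c D e (x (Suc t))
       + (1/2) * (x (Suc t) \<bullet> (matrix_inv (lasec_S c D (x (Suc t))) *v x (Suc t)))"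
      unfolding g_def D_def e_def
      by (simp add: lasec_phat_def lasec_Smat_def split: prod.split)
    have V': "lasec_V b c x y (Suc t) v z = lasec_V b c x y t v z + (norm (v (Suc t) - v (Max U)))\<^sup>2"
      using V_Suc_yes[OF True, of v] ne U_def by simp
    have sum': "(\<Sum>r\<in>lasec_upd b c x y (Suc t) z. g r) = g (Suc t) + (\<Sum>r\<in>U. g r)"
      unfolding U' using fin nin by simp
    have IH': "Phi D e (v (Max U)) \<le> (1/2) * b * (norm (v 1))^2 + (\<Sum>r\<in>U. g r) + (c/2) * lasec_V b c x y t v z"
      using IH unfolding U_def D_def e_def by simp
    have "Phi (lasec_S c D (x (Suc t))) (matrix_inv (mat 1 + (1/c) *\<^sub>R D) *v e + y (Suc t) *\<^sub>R x (Suc t)) (v (Suc t))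
       \<le> (1/2) * b * (norm (v 1))^2 + (\<Sum>r\<in>lasec_upd b c x y (Suc t) z. g r) + (c/2) * lasec_V b c x y (Suc t) v z"
    proof -
      have d: "c/2 * (lasec_V b c x y t v z + (norm (v (Suc t) - v (Max U)))\<^sup>2)
          = c/2 * lasec_V b c x y t v z + (1/2) * (c * (norm (v (Suc t) - v (Max U)))\<^sup>2)"
        by (simp add: algebra_simps)
      show ?thesis unfolding sum' V' d using core inf gS IH' by linarith
    qed
    moreover have "1 \<in> lasec_upd b c x y (Suc t) z" using IH U' U_def by auto
    ultimately show ?thesis
      unfolding st' fst_conv snd_conv using U' MaxU' by simp
  qed
qed



lemma state_dep:
  "(\<And>s. 1 \<le> s \<Longrightarrow> s \<le> t \<Longrightarrow> z s = z' s) \<Longrightarrow>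
    lasec_state b c x y z t = lasec_state b c x y z' t"
proof (induction t)
  case 0 then show ?case by simp
next
  case (Suc t)
  have "lasec_state b c x y z t = lasec_state b c x y z' t" using Suc by simp
  moreover have "z (Suc t) = z' (Suc t)" using Suc by simp
  ultimately show ?case by (simp add: Let_def split: prod.split)
qed

lemma phat_dep:
  "(\<And>s. 1 \<le> s \<Longrightarrow> s < t \<Longrightarrow> z s = z' s) \<Longrightarrow>
    lasec_phat b c x y z t = lasec_phat b c x y z' t"
  unfolding lasec_phat_def by (subst state_dep[of "t - 1" z z']) auto

lemma M_dep:
  "(\<And>s. 1 \<le> s \<Longrightarrow> s < t \<Longrightarrow> z s = z' s) \<Longrightarrow>
    lasec_M b c x y z t = lasec_M b c x y z' t"
  unfolding lasec_M_def using phat_dep by metis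

definition qq :: "real \<Rightarrow> real \<Rightarrow> real \<Rightarrow> (nat \<Rightarrow> real^'d) \<Rightarrow> (nat \<Rightarrow> real) \<Rightarrow> nat \<Rightarrow> (nat \<Rightarrow> bool) \<Rightarrow> real" where
  "qq a b c x y t z = a / (a + \<bar>lasec_phat b c x y z t\<bar>)"

lemma qq_dep:
  "(\<And>s. 1 \<le> s \<Longrightarrow> s < t \<Longrightarrow> z s = z' s) \<Longrightarrow> qq a b c x y t z = qq a b c x y t z'"
  unfolding qq_def using phat_dep by metis

lemma prob_Suc:
  "lasec_prob a b c x y (Suc T) (g(Suc T := bb)) =
     lasec_prob a b c x y T g * (if bb then qq a b c x y (Suc T) g else 1 - qq a b c x y (Suc T) g)"
proof -
  have ph: "lasec_phat b c x y (g(Suc T := bb)) t = lasec_phat b c x y g t" if "t \<le> Suc T" for t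
    by (rule phat_dep) (use that in auto)
  have "lasec_prob a b c x y (Suc T) (g(Suc T := bb)) =
     (\<Prod>t\<in>{1..T}. (let q = a / (a + \<bar>lasec_phat b c x y (g(Suc T := bb)) t\<bar>) in if (g(Suc T := bb)) t then q else 1 - q))
     * (let q = a / (a + \<bar>lasec_phat b c x y (g(Suc T := bb)) (Suc T)\<bar>) in if (g(Suc T := bb)) (Suc T) then q else 1 - q)"
    unfolding lasec_prob_def by (simp add: prod.cl_ivl_Suc)
  also have "(\<Prod>t\<in>{1..T}. (let q = a / (a + \<bar>lasec_phat b c x y (g(Suc T := bb)) t\<bar>) in if (g(Suc T := bb)) t then q else 1 - q))
      = lasec_prob a b c x y T g"
    unfolding lasec_prob_def by (rule prod.cong) (auto simp: ph)
  finally show ?thesis unfolding ph[of "Suc T", OF order.refl] fun_upd_same qq_def Let_def .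
qed

lemma marg:
  "lasec_E a b c x y (Suc T) F =
   lasec_E a b c x y T (\<lambda>z. qq a b c x y (Suc T) z * F (z(Suc T := True))
                          + (1 - qq a b c x y (Suc T) z) * F (z(Suc T := False)))"
proof -
  let ?P = "PiE {1..T} (\<lambda>_. UNIV :: bool set)"
  have dom: "{1..Suc T} = insert (Suc T) {1..T}" by auto
  have nin: "Suc T \<notin> {1..T}" by simp
  have img: "PiE {1..Suc T} (\<lambda>_. UNIV :: bool set) = (\<lambda>(bb, g). g(Suc T := bb)) ` (UNIV \<times> ?P)"
    unfolding dom PiE_insert_eq by simp
  have inj: "inj_on (\<lambda>(bb, g). g(Suc T := bb)) (UNIV \<times> ?P)"
    using inj_combinator[OF nin, of "\<lambda>_. UNIV :: bool set"] by simp
  have "lasec_E a b c x y (Suc T) F =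
      (\<Sum>(bb, g)\<in>UNIV \<times> ?P. lasec_prob a b c x y (Suc T) (g(Suc T := bb)) * F (g(Suc T := bb)))"
    unfolding lasec_E_def img by (subst sum.reindex[OF inj]) (simp add: case_prod_unfold)
  also have "\<dots> = (\<Sum>bb\<in>UNIV. \<Sum>g\<in>?P. lasec_prob a b c x y (Suc T) (g(Suc T := bb)) * F (g(Suc T := bb)))"
    by (rule sum.cartesian_product[symmetric])
  also have "\<dots> = (\<Sum>g\<in>?P. \<Sum>bb\<in>UNIV. lasec_prob a b c x y (Suc T) (g(Suc T := bb)) * F (g(Suc T := bb)))"
    by (rule sum.swap)
  also have "\<dots> = (\<Sum>g\<in>?P. lasec_prob a b c x y T g * (qq a b c x y (Suc T) g * F (g(Suc T := True))
                          + (1 - qq a b c x y (Suc T) g) * F (g(Suc T := False))))"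
  proof (rule sum.cong[OF refl])
    fix g
    have sb: "(\<Sum>bb\<in>UNIV. h bb) = h True + h False" for h :: "bool \<Rightarrow> real"
      by (simp add: UNIV_bool)
    show "(\<Sum>bb\<in>UNIV. lasec_prob a b c x y (Suc T) (g(Suc T := bb)) * F (g(Suc T := bb))) =
      lasec_prob a b c x y T g * (qq a b c x y (Suc T) g * F (g(Suc T := True))
                          + (1 - qq a b c x y (Suc T) g) * F (g(Suc T := False)))"
      unfolding sb prob_Suc if_True if_False by (simp only: algebra_simps)
  qed
  finally show ?thesis unfolding lasec_E_def .
qed

lemma E_cong: "(\<And>z. f z = g z) \<Longrightarrow> lasec_E a b c x y T f = lasec_E a b c x y T g"
  by metis

lemma E_zero: "lasec_E a b c x y 0 F = F (\<lambda>_. undefined)"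
  unfolding lasec_E_def lasec_prob_def by simp

lemma restrict:
  assumes dep: "\<And>z z'. (\<And>s. 1 \<le> s \<Longrightarrow> s \<le> t \<Longrightarrow> z s = z' s) \<Longrightarrow> F z = F z'"
  shows "t \<le> T \<Longrightarrow> lasec_E a b c x y T F = lasec_E a b c x y t F"
proof (induction T rule: dec_induct)
  case base then show ?case by simp
next
  case (step T)
  have "(\<lambda>z. qq a b c x y (Suc T) z * F (z(Suc T := True))
                          + (1 - qq a b c x y (Suc T) z) * F (z(Suc T := False))) = F"
  proof
    fix z
    have "F (z(Suc T := True)) = F z" "F (z(Suc T := False)) = F z"
      by (rule dep, use step in auto)+
    then show "qq a b c x y (Suc T) z * F (z(Suc T := True))
                          + (1 - qq a b c x y (Suc T) z) * F (z(Suc T := False)) = F z"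
      by (simp add: algebra_simps)
  qed
  then show ?case using step by (simp add: marg)
qed

lemma E_one: "lasec_E a b c x y T (\<lambda>_. 1) = 1"
  using restrict[of 0 "\<lambda>_. 1" T a b c x y] by (simp add: E_zero)

lemma keyG:
  assumes t: "1 \<le> t" "t \<le> T"
    and dep: "\<And>z z'. (\<And>s. 1 \<le> s \<Longrightarrow> s < t \<Longrightarrow> z s = z' s) \<Longrightarrow> H z = H z'"
  shows "lasec_E a b c x y T (\<lambda>z. H z * of_bool (z t)) = lasec_E a b c x y T (\<lambda>z. H z * qq a b c x y t z)"
proof -
  have r1: "lasec_E a b c x y T (\<lambda>z. H z * of_bool (z t)) = lasec_E a b c x y t (\<lambda>z. H z * of_bool (z t))"
  proof (rule restrict[OF _ t(2)])
    fix z z' :: "nat \<Rightarrow> bool" assume h: "\<And>s. 1 \<le> s \<Longrightarrow> s \<le> t \<Longrightarrow> z s = z' s"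
    have "H z = H z'" by (rule dep) (use h in simp)
    moreover have "z t = z' t" using h t by simp
    ultimately show "H z * of_bool (z t) = H z' * of_bool (z' t)" by simp
  qed
  have r2: "lasec_E a b c x y T (\<lambda>z. H z * qq a b c x y t z) = lasec_E a b c x y t (\<lambda>z. H z * qq a b c x y t z)"
  proof (rule restrict[OF _ t(2)])
    fix z z' :: "nat \<Rightarrow> bool" assume h: "\<And>s. 1 \<le> s \<Longrightarrow> s \<le> t \<Longrightarrow> z s = z' s"
    have "H z = H z'" by (rule dep) (use h in simp)
    moreover have "qq a b c x y t z = qq a b c x y t z'" by (rule qq_dep) (use h in simp)
    ultimately show "H z * qq a b c x y t z = H z' * qq a b c x y t z'" by simp
  qed
  obtain t' where t': "t = Suc t'" using t by (cases t) auto
  have Hu: "H (z(Suc t' := bb)) = H z" for z bb by (rule dep) (auto simp: t')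
  have qu: "qq a b c x y (Suc t') (z(Suc t' := bb)) = qq a b c x y (Suc t') z" for z bb by (rule qq_dep) auto
  have "lasec_E a b c x y (Suc t') (\<lambda>z. H z * of_bool (z (Suc t'))) =
        lasec_E a b c x y (Suc t') (\<lambda>z. H z * qq a b c x y (Suc t') z)"
    unfolding marg
  proof (rule E_cong)
    fix z
    show "qq a b c x y (Suc t') z * (H (z(Suc t' := True)) * of_bool ((z(Suc t' := True)) (Suc t'))) +
          (1 - qq a b c x y (Suc t') z) * (H (z(Suc t' := False)) * of_bool ((z(Suc t' := False)) (Suc t'))) =
          qq a b c x y (Suc t') z * (H (z(Suc t' := True)) * qq a b c x y (Suc t') (z(Suc t' := True))) +
          (1 - qq a b c x y (Suc t') z) * (H (z(Suc t' := False)) * qq a b c x y (Suc t') (z(Suc t' := False)))"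
      unfolding Hu qu fun_upd_same of_bool_eq by (simp only: algebra_simps)
  qed
  then show ?thesis unfolding r1 r2 using t' by simp
qed

lemma E_sum: "lasec_E a b c x y T (\<lambda>z. \<Sum>t\<in>A. f t z) = (\<Sum>t\<in>A. lasec_E a b c x y T (f t))"
  unfolding lasec_E_def by (simp add: sum_distrib_left) (rule sum.swap)

lemma prob_nonneg: "0 < a \<Longrightarrow> 0 \<le> lasec_prob a b c x y T z"
  unfolding lasec_prob_def Let_def by (rule prod_nonneg) auto

lemma prob_zero: "0 < a \<Longrightarrow> 1 \<le> T \<Longrightarrow> \<not> z 1 \<Longrightarrow> lasec_prob a b c x y T z = 0"
  unfolding lasec_prob_def Let_def
  by (rule prod_zero) (use phat_1[of b c x y z] in \<open>auto intro!: bexI[of _ 1]\<close>)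

lemma E_mono:
  assumes "0 < a" "\<And>z. T = 0 \<or> z 1 \<Longrightarrow> F z \<le> G z"
  shows "lasec_E a b c x y T F \<le> lasec_E a b c x y T G"
  unfolding lasec_E_def
proof (rule sum_mono)
  fix z
  show "lasec_prob a b c x y T z * F z \<le> lasec_prob a b c x y T z * G z"
  proof (cases "T = 0 \<or> z 1")
    case True then show ?thesis using assms prob_nonneg mult_left_mono by blast
  next
    case False
    then have "lasec_prob a b c x y T z = 0" using assms(1) by (intro prob_zero) auto
    then show ?thesis by simp
  qed
qed

lemma E_lin:
  "lasec_E a b c x y T (\<lambda>z. \<alpha> * F z + \<beta> * (\<kappa> + \<gamma> * G z + H z) + \<delta> * K z)
   = \<alpha> * lasec_E a b c x y T F + \<beta> * (\<kappa> + \<gamma> * lasec_E a b c x y T G + lasec_E a b c x y T H)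
     + \<delta> * lasec_E a b c x y T K"
proof -
  let ?P = "PiE {1..T} (\<lambda>_. UNIV :: bool set)"
  let ?p = "lasec_prob a b c x y T"
  have one: "(\<Sum>z\<in>?P. ?p z) = 1"
    using E_one[of a b c x y T] unfolding lasec_E_def by simp
  have "(\<Sum>z\<in>?P. ?p z * (\<alpha> * F z + \<beta> * (\<kappa> + \<gamma> * G z + H z) + \<delta> * K z))
     = (\<Sum>z\<in>?P. \<alpha> * (?p z * F z) + (\<beta> * \<kappa>) * ?p z + (\<beta> * \<gamma>) * (?p z * G z) + \<beta> * (?p z * H z) + \<delta> * (?p z * K z))"
    by (rule sum.cong) (simp_all add: algebra_simps)
  also have "\<dots> = \<alpha> * (\<Sum>z\<in>?P. ?p z * F z) + (\<beta> * \<kappa>) * (\<Sum>z\<in>?P. ?p z) + (\<beta> * \<gamma>) * (\<Sum>z\<in>?P. ?p z * G z)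
      + \<beta> * (\<Sum>z\<in>?P. ?p z * H z) + \<delta> * (\<Sum>z\<in>?P. ?p z * K z)"
    by (simp only: sum.distrib sum_distrib_left)
  finally show ?thesis unfolding lasec_E_def one by (simp add: algebra_simps)
qed



lemma sum_upd:
  fixes h :: "nat \<Rightarrow> real"
  shows "(\<Sum>t=1..T. of_bool (lasec_M b c x y z t \<and> z t) * h t) = (\<Sum>t\<in>lasec_upd b c x y T z. h t)"
proof -
  have "(\<Sum>t\<in>{t\<in>{1..T}. lasec_M b c x y z t \<and> z t}. h t) = (\<Sum>t=1..T. if lasec_M b c x y z t \<and> z t then h t else 0)"
    by (rule sum.inter_filter) simp
  moreover have "(\<Sum>t=1..T. of_bool (lasec_M b c x y z t \<and> z t) * h t) = (\<Sum>t=1..T. if lasec_M b c x y z t \<and> z t then h t else 0)"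
    by (rule sum.cong) auto
  ultimately show ?thesis unfolding lasec_upd_def by simp
qed

lemma V_scale:
  "lasec_V b c x y T (\<lambda>t. k *\<^sub>R u t) z = k^2 * lasec_V b c x y T u z"
proof -
  have n: "(norm (k *\<^sub>R p - k *\<^sub>R q))\<^sup>2 = k^2 * (norm (p - q))\<^sup>2" for p q :: "real^'a"
    by (simp add: scaleR_diff_right[symmetric] power_mult_distrib)
  show ?thesis unfolding lasec_V_def Let_def sum_distrib_left
    by (rule sum.cong[OF refl]) (simp only: n if_distrib[of "(*) (k^2)"] mult_zero_right)
qed

lemma mistake_yp:
  fixes y p :: real
  assumes "y = -1 \<or> y = 1" "sgn p \<noteq> y"
  shows "y * p = - \<bar>p\<bar>"
  using assms by (cases "p > 0"; cases "p < 0") (auto simp: sgn_if)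

lemma pointwise:
  fixes x u :: "nat \<Rightarrow> real^'d"
  assumes b: "0 < b" and bc: "b < c" and a: "0 < a" and g: "0 < \<gamma>"
    and y: "\<forall>t\<in>{1..T}. y t = -1 \<or> y t = 1" and z: "T = 0 \<or> z 1"
  shows "(\<Sum>t=1..T. of_bool (lasec_M b c x y z t \<and> z t) * ((a + \<bar>lasec_phat b c x y z t\<bar>) / a))
    \<le> (1/\<gamma>) * (\<Sum>t=1..T. of_bool (lasec_M b c x y z t \<and> z t) * hinge \<gamma> (y t) (u t) (x t))
      + a / (2 * \<gamma>\<^sup>2) * (b * (norm (u 1))\<^sup>2 + c * lasec_V b c x y T u z
          + (\<Sum>t=1..T. of_bool (lasec_M b c x y z t \<and> z t) * (u t \<bullet> x t)\<^sup>2))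
      + 1 / (2 * a) * (\<Sum>t=1..T. of_bool (lasec_M b c x y z t \<and> z t)
                      * (x t \<bullet> (matrix_inv (lasec_Smat b c x y z t) *v x t)))"
proof (cases "T = 0")
  case True
  have "lasec_upd b c x y T z = {}" unfolding lasec_upd_def True by simp
  then have "lasec_V b c x y T u z = 0" unfolding lasec_V_def by simp
  then show ?thesis using True a g b by simp
next
  case False
  then have T1: "1 \<le> T" and z1: "z 1" using z by auto
  define U where "U = lasec_upd b c x y T z"
  have finU: "finite U" unfolding U_def lasec_upd_def by simp
  define k where "k = a / \<gamma>"
  have k: "0 < k" unfolding k_def using a g by simp
  define v where "v = (\<lambda>t. k *\<^sub>R u t)"
  define gg where "gg \<equiv> \<lambda>r. (1/2) * (v r \<bullet> x r)^2 - y r * (v r \<bullet> x r) + y r * lasec_phat b c x y z r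
                 + (1/2) * (x r \<bullet> (matrix_inv (lasec_Smat b c x y z r) *v x r))"
  define L where "L = (\<lambda>r. (a + \<bar>lasec_phat b c x y z r\<bar>) / a)"
  define R where "R = (\<lambda>r. (1/\<gamma>) * hinge \<gamma> (y r) (u r) (x r) + a / (2 * \<gamma>\<^sup>2) * (u r \<bullet> x r)\<^sup>2
        + 1 / (2 * a) * (x r \<bullet> (matrix_inv (lasec_Smat b c x y z r) *v x r)))"
  have inv: "Phi (fst (lasec_state b c x y z T)) (snd (lasec_state b c x y z T)) (v (Max U))
       \<le> (1/2) * b * (norm (v 1))^2 + (\<Sum>r\<in>U. gg r) + (c/2) * lasec_V b c x y T v z"
    using invariant[where b=b and c=c and y=y and z=z and T=T and t=T and v=v and x=x, OF b bc y z1] T1 unfolding gg_def U_def by auto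
  have "0 \<le> Phi (fst (lasec_state b c x y z T)) (snd (lasec_state b c x y z T)) (v (Max U))"
    by (rule Phi_nonneg[OF state_pdm[OF b bc]])
  with inv have main: "0 \<le> (1/2) * b * (norm (v 1))^2 + (\<Sum>r\<in>U. gg r) + (c/2) * lasec_V b c x y T v z"
    by linarith
  have each: "gg r \<le> a * R r - a * L r" if "r \<in> U" for r
  proof -
    have r: "r \<in> {1..T}" "lasec_M b c x y z r" using that unfolding U_def lasec_upd_def by auto
    have yr: "y r = -1 \<or> y r = 1" using y r by auto
    have yp: "y r * lasec_phat b c x y z r = - \<bar>lasec_phat b c x y z r\<bar>"
      using mistake_yp[OF yr] r(2) unfolding lasec_M_def by blast
    have hg: "hinge \<gamma> (y r) (u r) (x r) \<ge> \<gamma> - y r * (u r \<bullet> x r)" unfolding hinge_def by simp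
    have vx: "v r \<bullet> x r = k * (u r \<bullet> x r)" unfolding v_def by simp
    have aR: "a * R r = k * hinge \<gamma> (y r) (u r) (x r) + (1/2) * k^2 * (u r \<bullet> x r)\<^sup>2
        + (1/2) * (x r \<bullet> (matrix_inv (lasec_Smat b c x y z r) *v x r))"
      unfolding R_def k_def using a g by (simp add: field_simps power2_eq_square)
    have aL: "a * L r = a + \<bar>lasec_phat b c x y z r\<bar>" unfolding L_def using a by simp
    have "k * hinge \<gamma> (y r) (u r) (x r) \<ge> k * (\<gamma> - y r * (u r \<bullet> x r))"
      using hg k by (simp add: mult_left_mono)
    moreover have "k * \<gamma> = a" unfolding k_def using g by simp
    ultimately have "k * hinge \<gamma> (y r) (u r) (x r) \<ge> a - y r * (k * (u r \<bullet> x r))"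
      by (simp add: algebra_simps)
    then show ?thesis unfolding gg_def aR aL vx yp by (simp add: power_mult_distrib algebra_simps)
  qed
  have "(\<Sum>r\<in>U. gg r) \<le> (\<Sum>r\<in>U. a * R r - a * L r)" using each by (rule sum_mono)
  also have "\<dots> = a * (\<Sum>r\<in>U. R r) - a * (\<Sum>r\<in>U. L r)"
    by (simp add: sum_subtractf sum_distrib_left)
  finally have "a * (\<Sum>r\<in>U. L r) \<le> (1/2) * b * (norm (v 1))^2 + a * (\<Sum>r\<in>U. R r) + (c/2) * lasec_V b c x y T v z"
    using main by linarith
  moreover have nv: "(norm (v 1))^2 = k^2 * (norm (u 1))^2" unfolding v_def by (simp add: power_mult_distrib)
  moreover have Vv: "lasec_V b c x y T v z = k^2 * lasec_V b c x y T u z" unfolding v_def by (rule V_scale)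
  moreover have kk: "(1/2) * b * (k^2 * (norm (u 1))^2) + (c/2) * (k^2 * lasec_V b c x y T u z)
      = a * (a / (2 * \<gamma>\<^sup>2) * (b * (norm (u 1))\<^sup>2 + c * lasec_V b c x y T u z))"
    unfolding k_def using a g by (simp add: field_simps power2_eq_square)
  ultimately have "a * (\<Sum>r\<in>U. L r) \<le> a * ((\<Sum>r\<in>U. R r) + a / (2 * \<gamma>\<^sup>2) * (b * (norm (u 1))\<^sup>2 + c * lasec_V b c x y T u z))"
    by (simp only: distrib_left)
  then have fin: "(\<Sum>r\<in>U. L r) \<le> (\<Sum>r\<in>U. R r) + a / (2 * \<gamma>\<^sup>2) * (b * (norm (u 1))\<^sup>2 + c * lasec_V b c x y T u z)"
    using a by simp
  have SR: "(\<Sum>r\<in>U. R r) = (1/\<gamma>) * (\<Sum>r\<in>U. hinge \<gamma> (y r) (u r) (x r)) + a / (2 * \<gamma>\<^sup>2) * (\<Sum>r\<in>U. (u r \<bullet> x r)\<^sup>2)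
        + 1 / (2 * a) * (\<Sum>r\<in>U. x r \<bullet> (matrix_inv (lasec_Smat b c x y z r) *v x r))"
    unfolding R_def by (simp add: sum.distrib sum_distrib_left)
  show ?thesis unfolding sum_upd U_def[symmetric] L_def[symmetric]
    using fin SR by (simp add: algebra_simps)
qed



theorem theorem4:
  fixes a b c \<gamma> :: real and T :: nat
    and x u :: "nat \<Rightarrow> real^'d" and y :: "nat \<Rightarrow> real"
  assumes "0 < b" and "b < c" and "0 < a" and "0 < \<gamma>"
    and "\<forall>t\<in>{1..T}. y t = -1 \<or> y t = 1"
  shows "(lasec_E a b c x y T (\<lambda>z. \<Sum>t=1..T. of_bool (lasec_M b c x y z t))
         \<le> (1/\<gamma>) * lasec_E a b c x y T
               (\<lambda>z. \<Sum>t=1..T. of_bool (lasec_M b c x y z t \<and> z t) * hinge \<gamma> (y t) (u t) (x t))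
           + a / (2 * \<gamma>\<^sup>2) *
               (b * (norm (u 1))\<^sup>2
                + c * lasec_E a b c x y T (lasec_V b c x y T u)
                + lasec_E a b c x y T
                    (\<lambda>z. \<Sum>t=1..T. of_bool (lasec_M b c x y z t \<and> z t) * (u t \<bullet> x t)\<^sup>2))
           + 1 / (2 * a) * lasec_E a b c x y T
               (\<lambda>z. \<Sum>t=1..T. of_bool (lasec_M b c x y z t \<and> z t)
                      * (x t \<bullet> (matrix_inv (lasec_Smat b c x y z t) *v x t))))
         \<and> (lasec_E a b c x y T (\<lambda>z. \<Sum>t=1..T. of_bool (z t))
         = (\<Sum>t=1..T. lasec_E a b c x y T (\<lambda>z. a / (a + \<bar>lasec_phat b c x y z t\<bar>))))"
proof -
  let ?E = "lasec_E a b c x y T"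
  let ?q = "\<lambda>t z. qq a b c x y t z"
  have b: "0 < b" and bc: "b < c" and a: "0 < a" and g: "0 < \<gamma>" and y: "\<forall>t\<in>{1..T}. y t = -1 \<or> y t = 1"
    using assms by auto
  have part2: "?E (\<lambda>z. \<Sum>t=1..T. of_bool (z t)) = (\<Sum>t=1..T. ?E (\<lambda>z. a / (a + \<bar>lasec_phat b c x y z t\<bar>)))"
  proof -
    have "?E (\<lambda>z. \<Sum>t=1..T. of_bool (z t)) = (\<Sum>t=1..T. ?E (\<lambda>z. of_bool (z t)))" by (rule E_sum)
    also have "\<dots> = (\<Sum>t=1..T. ?E (\<lambda>z. a / (a + \<bar>lasec_phat b c x y z t\<bar>)))"
    proof (rule sum.cong[OF refl])
      fix t assume t: "t \<in> {1..T}"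
      have "?E (\<lambda>z. 1 * of_bool (z t)) = ?E (\<lambda>z. 1 * ?q t z)"
        by (rule keyG) (use t in auto)
      then show "?E (\<lambda>z. of_bool (z t)) = ?E (\<lambda>z. a / (a + \<bar>lasec_phat b c x y z t\<bar>))"
        by (simp add: qq_def)
    qed
    finally show ?thesis .
  qed
  define H where "H = (\<lambda>t z. of_bool (lasec_M b c x y z t) * ((a + \<bar>lasec_phat b c x y z t\<bar>) / a))"
  have "?E (\<lambda>z. \<Sum>t=1..T. of_bool (lasec_M b c x y z t)) = (\<Sum>t=1..T. ?E (\<lambda>z. of_bool (lasec_M b c x y z t)))"
    by (rule E_sum)
  also have "\<dots> = (\<Sum>t=1..T. ?E (\<lambda>z. H t z * of_bool (z t)))"
  proof (rule sum.cong[OF refl])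
    fix t assume t: "t \<in> {1..T}"
    have "?E (\<lambda>z. of_bool (lasec_M b c x y z t)) = ?E (\<lambda>z. H t z * ?q t z)"
    proof (rule E_cong)
      fix z
      have "0 < a + \<bar>lasec_phat b c x y z t\<bar>" using a by (simp add: add_pos_nonneg)
      then have "(a + \<bar>lasec_phat b c x y z t\<bar>) / a * (a / (a + \<bar>lasec_phat b c x y z t\<bar>)) = 1"
        using a by simp
      then show "of_bool (lasec_M b c x y z t) = H t z * ?q t z"
        unfolding H_def qq_def by (simp only: mult.assoc)
    qed
    also have "\<dots> = ?E (\<lambda>z. H t z * of_bool (z t))"
    proof (rule keyG[symmetric])
      show "1 \<le> t" "t \<le> T" using t by auto
      fix z z' :: "nat \<Rightarrow> bool" assume h: "\<And>s. 1 \<le> s \<Longrightarrow> s < t \<Longrightarrow> z s = z' s"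
      have "lasec_M b c x y z t = lasec_M b c x y z' t" by (rule M_dep) (use h in auto)
      moreover have "lasec_phat b c x y z t = lasec_phat b c x y z' t" by (rule phat_dep) (use h in auto)
      ultimately show "H t z = H t z'" unfolding H_def by simp
    qed
    finally show "?E (\<lambda>z. of_bool (lasec_M b c x y z t)) = ?E (\<lambda>z. H t z * of_bool (z t))" .
  qed
  also have "\<dots> = ?E (\<lambda>z. \<Sum>t=1..T. of_bool (lasec_M b c x y z t \<and> z t) * ((a + \<bar>lasec_phat b c x y z t\<bar>) / a))"
    by (subst E_sum[symmetric]) (rule E_cong, rule sum.cong, auto simp: H_def)
  also have "\<dots> \<le> ?E (\<lambda>z. (1/\<gamma>) * (\<Sum>t=1..T. of_bool (lasec_M b c x y z t \<and> z t) * hinge \<gamma> (y t) (u t) (x t))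
      + a / (2 * \<gamma>\<^sup>2) * (b * (norm (u 1))\<^sup>2 + c * lasec_V b c x y T u z
          + (\<Sum>t=1..T. of_bool (lasec_M b c x y z t \<and> z t) * (u t \<bullet> x t)\<^sup>2))
      + 1 / (2 * a) * (\<Sum>t=1..T. of_bool (lasec_M b c x y z t \<and> z t)
                      * (x t \<bullet> (matrix_inv (lasec_Smat b c x y z t) *v x t))))"
    by (rule E_mono[OF a]) (rule pointwise[OF b bc a g y])
  also have "\<dots> = (1/\<gamma>) * lasec_E a b c x y T
               (\<lambda>z. \<Sum>t=1..T. of_bool (lasec_M b c x y z t \<and> z t) * hinge \<gamma> (y t) (u t) (x t))
           + a / (2 * \<gamma>\<^sup>2) *
               (b * (norm (u 1))\<^sup>2
                + c * lasec_E a b c x y T (lasec_V b c x y T u)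
                + lasec_E a b c x y T
                    (\<lambda>z. \<Sum>t=1..T. of_bool (lasec_M b c x y z t \<and> z t) * (u t \<bullet> x t)\<^sup>2))
           + 1 / (2 * a) * lasec_E a b c x y T
               (\<lambda>z. \<Sum>t=1..T. of_bool (lasec_M b c x y z t \<and> z t)
                      * (x t \<bullet> (matrix_inv (lasec_Smat b c x y z t) *v x t)))"
    by (rule E_lin)
  finally show ?thesis using part2 by blast
qed

end
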